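(* Assume $F$ is coercive over the set $\{(\mathbf{W},\mathbf{z},\mathbf{a},\mathbf{b}) : h_l(z_l)-\epsilon\le a_l\le h_l(z_l)+\epsilon,\ l=1,\dots,L-1\}$. For the TIAM iterates described in the context, let $M>0$ be a Lipschitz constant of $\nabla\phi$ (gradient with respect to $(a,W,z,b)$) on a bounded set containing all iterates and their extrapolations, and set $C_1=\max(M,M+\theta_1^{k+1},\dots,M+\theta_L^{k+1})$. Then for every $k\in\mathbb{N}$ there exists $g_1^{k+1}\in\partial_{\mathbf{W}^{k+1}}F$ such that $\|g_1^{k+1}\|\le C_1\big(\|\mathbf{W}^{k+1}-\mathbf{W}^k\|+\|\mathbf{z}^{k+1}-\mathbf{z}^k\|+\|\mathbf{a}^{k+1}-\mathbf{a}^k\|+\|\mathbf{b}^{k+1}-\mathbf{b}^k\|+\|\mathbf{W}^k-\mathbf{W}^{k-1}\|+\|\mathbf{b}^k-\mathbf{b}^{k-1}\|+\|\mathbf{z}^k-\mathbf{z}^{k-1}\|\big)$, where $\partial_{\mathbf{W}^{k+1}}F$ denotes the limiting subdifferential of $F$ with respect to $\mathbf{W}$ at $(\mathbf{W}^{k+1},\mathbf{z}^{k+1},\mathbf{a}^{k+1},\mathbf{b}^{k+1})$.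
   Context: Problem. Fix $L\ge 1$, dimensions $n_0=d,n_1,\dots,n_L$, an input $a_0=x\in\mathbb{R}^d$, a label vector $y$, and parameters $\rho>0$, $\epsilon>0$, $p_1,p_2,p_3\in[0,1)$. Variables: $\mathbf{W}=(W_l)_{l=1}^L$, $W_l\in\mathbb{R}^{n_l\times n_{l-1}}$; $\mathbf{b}=(b_l)_{l=1}^L$, $\mathbf{z}=(z_l)_{l=1}^L$ with $b_l,z_l\in\mathbb{R}^{n_l}$; $\mathbf{a}=(a_l)_{l=1}^{L-1}$, $a_l\in\mathbb{R}^{n_l}$. The activations $h_l$ are continuous (applied componentwise); the loss $z_L\mapsto R(z_L;y)$ and the regularizers $\Omega_l$ are continuous, convex and proper, with $\Omega_l\ge 0$. Norms are Euclidean/Frobenius. Let $\phi(a_{l-1},W_l,z_l,b_l)=\frac{\rho}{2}\|z_l-W_la_{l-1}-b_l\|^2$ and $F(\mathbf{W},\mathbf{z},\mathbf{a},\mathbf{b})=R(z_L;y)+\sum_{l=1}^L\Omega_l(W_l)+\sum_{l=1}^L\phi(a_{l-1},W_l,z_l,b_l)$. The subdifferential $\partial_{\mathbf{W}}F$ is the product $\partial_{W_1}F\times\cdots\times\partial_{W_L}F$. Algorithm (TIAM). Iterates $(\mathbf{W}^k,\mathbf{z}^k,\mathbf{a}^k,\mathbf{b}^k)$, $k=0,1,\dots$. In iteration $k\to k+1$, for $l=1,\dots,L$ in order, the blocks $W_l$, $b_l$, $z_l$ and (if $l<L$) $a_l$ are updated in this order. For a block $u$: $\tilde u^{k+1}=u^k+p_1(u^k-u^{k-1})$,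 $\hat u^{k+1}=u^k+p_2(u^k-u^{k-1})$, and after computing $u^{k+1}$, $\bar u^{k+1}=u^{k+1}+p_3(u^{k+1}-u^k)$. Updates: (W) $W_l^{k+1}\in\arg\min_{W_l}\langle\nabla_{W_l}\phi(\bar a_{l-1}^{k+1},\hat W_l^{k+1},\bar z_l^k,\bar b_l^k),W_l-\tilde W_l^{k+1}\rangle+\frac{\theta_l^{k+1}}{2}\|W_l-\tilde W_l^{k+1}\|^2+\Omega_l(W_l)$, with $\theta_l^{k+1}>0$ chosen by backtracking so that $\phi(\bar a_{l-1}^{k+1},\tilde W_l^{k+1},\bar z_l^k,\bar b_l^k)+\langle\nabla_{W_l}\phi(\bar a_{l-1}^{k+1},\hat W_l^{k+1},\bar z_l^k,\bar b_l^k),W_l^{k+1}-\tilde W_l^{k+1}\rangle+\frac{\theta_l^{k+1}}{2}\|W_l^{k+1}-\tilde W_l^{k+1}\|^2\ge\phi(a_{l-1}^{k+1},W_l^{k+1},z_l^k,b_l^k)$. (b) $b_l^{k+1}=\tilde b_l^{k+1}-\nabla_{b_l}\phi(\bar a_{l-1}^{k+1},\bar W_l^{k+1},\bar z_l^k,\hat b_l^{k+1})/\xi_l^{k+1}$, with $\xi_l^{k+1}>0$ chosen by backtracking so that the analogous linearized model with parameter $\xi_l^{k+1}$ at $b_l^{k+1}$ dominates $\phi(a_{l-1}^{k+1},W_l^{k+1},z_l^k,b_l^{k+1})$. (z) For $l<L$: $z_l^{k+1}\in\arg\min_{z_l}\langle\nabla_{z_l}\phi(\bar a_{l-1}^{k+1},\bar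 W_l^{k+1},\hat z_l^{k+1},\bar b_l^{k+1}),z_l-\tilde z_l^{k+1}\rangle+\frac{\rho}{2}\|z_l-\tilde z_l^{k+1}\|^2$ subject to $h_l(z_l)-\epsilon\le a_l^k\le h_l(z_l)+\epsilon$; for $l=L$ the same objective plus $R(z_L;y)$, unconstrained. (a) $a_l^{k+1}\in\arg\min_{a_l}\langle\nabla_{a_l}\phi(\hat a_l^{k+1},\bar W_{l+1}^k,\bar z_{l+1}^k,\bar b_{l+1}^k),a_l-\tilde a_l^{k+1}\rangle+\frac{\tau_l^{k+1}}{2}\|a_l-\tilde a_l^{k+1}\|^2$ subject to $h_l(\bar z_l^{k+1})-\epsilon\le a_l\le h_l(\bar z_l^{k+1})+\epsilon$, with $\tau_l^{k+1}>0$ chosen by backtracking so that the linearized model at $a_l^{k+1}$ dominates $\phi(a_l^{k+1},W_{l+1}^k,z_{l+1}^k,b_{l+1}^k)$. Safeguard: if after a block update the value of $F$ (blocks already updated in this iteration at new values, others at iteration-$k$ values) is not smaller than before that block update, the block update is recomputed without acceleration: $\tilde u^{k+1}=\hat u^{k+1}=u^k$ and all extrapolated (barred) quantities of the other blocks are replaced by their non-extrapolated current values. *)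

theory Defs
  imports "Jordan_Normal_Form.Matrix"
begin

definition vnorm :: "real vec \<Rightarrow> real" where
  "vnorm v = sqrt (v \<bullet> v)"

definition minner :: "real mat \<Rightarrow> real mat \<Rightarrow> real" where
  "minner A B = (\<Sum>i<dim_row A. \<Sum>j<dim_col A. A $$ (i,j) * B $$ (i,j))"

definition fnorm :: "real mat \<Rightarrow> real" where
  "fnorm A = sqrt (minner A A)"

definition ext_v :: "real \<Rightarrow> real vec \<Rightarrow> real vec \<Rightarrow> real vec" where
  "ext_v p u u_prev = u + p \<cdot>\<^sub>v (u - u_prev)"

definition ext_m :: "real \<Rightarrow> real mat \<Rightarrow> real mat \<Rightarrow> real mat" where
  "ext_m p u u_prev = u + p \<cdot>\<^sub>m (u - u_prev)"

definition resid :: "real vec \<Rightarrow> real mat \<Rightarrow> real vec \<Rightarrow> real vec \<Rightarrow> real vec" where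
  "resid a W z b = z - W *\<^sub>v a - b"

definition phi :: "real \<Rightarrow> real vec \<Rightarrow> real mat \<Rightarrow> real vec \<Rightarrow> real vec \<Rightarrow> real" where
  "phi \<rho> a W z b = \<rho> / 2 * (vnorm (resid a W z b))\<^sup>2"

definition grad_a :: "real \<Rightarrow> real vec \<Rightarrow> real mat \<Rightarrow> real vec \<Rightarrow> real vec \<Rightarrow> real vec" where
  "grad_a \<rho> a W z b = (- \<rho>) \<cdot>\<^sub>v (transpose_mat W *\<^sub>v resid a W z b)"

definition grad_W :: "real \<Rightarrow> real vec \<Rightarrow> real mat \<Rightarrow> real vec \<Rightarrow> real vec \<Rightarrow> real mat" where
  "grad_W \<rho> a W z b =
     (- \<rho>) \<cdot>\<^sub>m mat (dim_vec (resid a W z b)) (dim_vec a)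
                    (\<lambda>(i,j). resid a W z b $ i * a $ j)"

definition grad_z :: "real \<Rightarrow> real vec \<Rightarrow> real mat \<Rightarrow> real vec \<Rightarrow> real vec \<Rightarrow> real vec" where
  "grad_z \<rho> a W z b = \<rho> \<cdot>\<^sub>v resid a W z b"

definition grad_b :: "real \<Rightarrow> real vec \<Rightarrow> real mat \<Rightarrow> real vec \<Rightarrow> real vec \<Rightarrow> real vec" where
  "grad_b \<rho> a W z b = (- \<rho>) \<cdot>\<^sub>v resid a W z b"

type_synonym tup = "real vec \<times> real mat \<times> real vec \<times> real vec"  \<comment> \<open>(a, W, z, b)\<close>

definition tup_dist :: "tup \<Rightarrow> tup \<Rightarrow> real" where
  "tup_dist u v = (case u of (a,W,z,b) \<Rightarrow> case v of (a',W',z',b') \<Rightarrow>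
     sqrt ((vnorm (a - a'))\<^sup>2 + (fnorm (W - W'))\<^sup>2 + (vnorm (z - z'))\<^sup>2 + (vnorm (b - b'))\<^sup>2))"

definition tup_norm :: "tup \<Rightarrow> real" where
  "tup_norm u = (case u of (a,W,z,b) \<Rightarrow>
     sqrt ((vnorm a)\<^sup>2 + (fnorm W)\<^sup>2 + (vnorm z)\<^sup>2 + (vnorm b)\<^sup>2))"

definition grad_dist :: "real \<Rightarrow> tup \<Rightarrow> tup \<Rightarrow> real" where
  "grad_dist \<rho> u v = (case u of (a,W,z,b) \<Rightarrow> case v of (a',W',z',b') \<Rightarrow>
     sqrt ((vnorm (grad_a \<rho> a W z b - grad_a \<rho> a' W' z' b'))\<^sup>2
         + (fnorm (grad_W \<rho> a W z b - grad_W \<rho> a' W' z' b'))\<^sup>2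
         + (vnorm (grad_z \<rho> a W z b - grad_z \<rho> a' W' z' b'))\<^sup>2
         + (vnorm (grad_b \<rho> a W z b - grad_b \<rho> a' W' z' b'))\<^sup>2))"

definition act :: "real vec \<Rightarrow> (nat \<Rightarrow> real vec) \<Rightarrow> nat \<Rightarrow> real vec" where
  "act x a l = (if l = 0 then x else a l)"

text \<open>F(W,z,a,b); R is the loss z_L |-> R(z_L; y) with the label y fixed.\<close>
definition Fobj :: "nat \<Rightarrow> real vec \<Rightarrow> real \<Rightarrow> (real vec \<Rightarrow> real) \<Rightarrow> (nat \<Rightarrow> real mat \<Rightarrow> real)
    \<Rightarrow> (nat \<Rightarrow> real mat) \<Rightarrow> (nat \<Rightarrow> real vec) \<Rightarrow> (nat \<Rightarrow> real vec) \<Rightarrow> (nat \<Rightarrow> real vec) \<Rightarrow> real" where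
  "Fobj L x \<rho> R \<Omega> W z a b =
     R (z L) + (\<Sum>l=1..L. \<Omega> l (W l)) + (\<Sum>l=1..L. phi \<rho> (act x a (l - 1)) (W l) (z l) (b l))"

definition wf_state :: "nat \<Rightarrow> (nat \<Rightarrow> nat) \<Rightarrow> (nat \<Rightarrow> real mat) \<Rightarrow> (nat \<Rightarrow> real vec)
    \<Rightarrow> (nat \<Rightarrow> real vec) \<Rightarrow> (nat \<Rightarrow> real vec) \<Rightarrow> bool" where
  "wf_state L n W z a b \<longleftrightarrow> (\<forall>l\<in>{1..L}.
     W l \<in> carrier_mat (n l) (n (l - 1)) \<and> z l \<in> carrier_vec (n l) \<and> b l \<in> carrier_vec (n l)
     \<and> (l < L \<longrightarrow> a l \<in> carrier_vec (n l)))"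

definition state_norm :: "nat \<Rightarrow> (nat \<Rightarrow> real mat) \<Rightarrow> (nat \<Rightarrow> real vec)
    \<Rightarrow> (nat \<Rightarrow> real vec) \<Rightarrow> (nat \<Rightarrow> real vec) \<Rightarrow> real" where
  "state_norm L W z a b = sqrt ((\<Sum>l=1..L. (fnorm (W l))\<^sup>2) + (\<Sum>l=1..L. (vnorm (z l))\<^sup>2)
      + (\<Sum>l=1..L-1. (vnorm (a l))\<^sup>2) + (\<Sum>l=1..L. (vnorm (b l))\<^sup>2))"

definition normWs :: "nat \<Rightarrow> (nat \<Rightarrow> real mat) \<Rightarrow> real" where
  "normWs L W = sqrt (\<Sum>l=1..L. (fnorm (W l))\<^sup>2)"

definition normVs :: "nat \<Rightarrow> nat \<Rightarrow> (nat \<Rightarrow> real vec) \<Rightarrow> real" where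
  "normVs lo hi v = sqrt (\<Sum>l=lo..hi. (vnorm (v l))\<^sup>2)"

definition box :: "(real \<Rightarrow> real) \<Rightarrow> real \<Rightarrow> nat \<Rightarrow> real vec \<Rightarrow> real vec \<Rightarrow> bool" where
  "box h \<epsilon> m z a \<longleftrightarrow> (\<forall>i<m. h (z $ i) - \<epsilon> \<le> a $ i \<and> a $ i \<le> h (z $ i) + \<epsilon>)"

definition coercive_on_feasible :: "nat \<Rightarrow> (nat \<Rightarrow> nat) \<Rightarrow> (nat \<Rightarrow> real \<Rightarrow> real) \<Rightarrow> real
    \<Rightarrow> ((nat \<Rightarrow> real mat) \<Rightarrow> (nat \<Rightarrow> real vec) \<Rightarrow> (nat \<Rightarrow> real vec) \<Rightarrow> (nat \<Rightarrow> real vec) \<Rightarrow> real)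
    \<Rightarrow> bool" where
  "coercive_on_feasible L n h \<epsilon> F \<longleftrightarrow>
     (\<forall>c. \<exists>r. \<forall>W z a b. wf_state L n W z a b \<and> (\<forall>l\<in>{1..L-1}. box (h l) \<epsilon> (n l) (z l) (a l))
        \<and> state_norm L W z a b \<ge> r \<longrightarrow> F W z a b \<ge> c)"

definition convex_on_mat :: "nat \<Rightarrow> nat \<Rightarrow> (real mat \<Rightarrow> real) \<Rightarrow> bool" where
  "convex_on_mat r c f \<longleftrightarrow> (\<forall>X\<in>carrier_mat r c. \<forall>Y\<in>carrier_mat r c. \<forall>t::real. 0 \<le> t \<and> t \<le> 1 \<longrightarrow>
      f (t \<cdot>\<^sub>m X + (1 - t) \<cdot>\<^sub>m Y) \<le> t * f X + (1 - t) * f Y)"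

definition cont_on_mat :: "nat \<Rightarrow> nat \<Rightarrow> (real mat \<Rightarrow> real) \<Rightarrow> bool" where
  "cont_on_mat r c f \<longleftrightarrow> (\<forall>X\<in>carrier_mat r c. \<forall>e>0. \<exists>d>0. \<forall>Y\<in>carrier_mat r c.
      fnorm (Y - X) < d \<longrightarrow> \<bar>f Y - f X\<bar> < e)"

definition convex_on_vec :: "nat \<Rightarrow> (real vec \<Rightarrow> real) \<Rightarrow> bool" where
  "convex_on_vec m f \<longleftrightarrow> (\<forall>X\<in>carrier_vec m. \<forall>Y\<in>carrier_vec m. \<forall>t::real. 0 \<le> t \<and> t \<le> 1 \<longrightarrow>
      f (t \<cdot>\<^sub>v X + (1 - t) \<cdot>\<^sub>v Y) \<le> t * f X + (1 - t) * f Y)"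

definition cont_on_vec :: "nat \<Rightarrow> (real vec \<Rightarrow> real) \<Rightarrow> bool" where
  "cont_on_vec m f \<longleftrightarrow> (\<forall>X\<in>carrier_vec m. \<forall>e>0. \<exists>d>0. \<forall>Y\<in>carrier_vec m.
      vnorm (Y - X) < d \<longrightarrow> \<bar>f Y - f X\<bar> < e)"

definition frechet_subdiff_mat :: "nat \<Rightarrow> nat \<Rightarrow> (real mat \<Rightarrow> real) \<Rightarrow> real mat \<Rightarrow> real mat set" where
  "frechet_subdiff_mat r c f X = {G \<in> carrier_mat r c. \<forall>e>0. \<exists>d>0. \<forall>Y\<in>carrier_mat r c.
      fnorm (Y - X) < d \<longrightarrow> f Y \<ge> f X + minner G (Y - X) - e * fnorm (Y - X)}"

definition limiting_subdiff_mat :: "nat \<Rightarrow> nat \<Rightarrow> (real mat \<Rightarrow> real) \<Rightarrow> real mat \<Rightarrow> real mat set" where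
  "limiting_subdiff_mat r c f X = {G \<in> carrier_mat r c. \<exists>Xs Gs.
      (\<forall>j. Xs j \<in> carrier_mat r c \<and> Gs j \<in> frechet_subdiff_mat r c f (Xs j))
      \<and> (\<lambda>j. fnorm (Xs j - X)) \<longlonglongrightarrow> 0
      \<and> (\<lambda>j. f (Xs j)) \<longlonglongrightarrow> f X
      \<and> (\<lambda>j. fnorm (Gs j - G)) \<longlonglongrightarrow> 0}"

text \<open>W-update: Wn minimises the linearised model over R^{r x c}; theta > 0 satisfies the
  backtracking (descent) inequality; aT zT bT are the non-extrapolated values on the right.\<close>
definition W_step :: "real \<Rightarrow> (real mat \<Rightarrow> real) \<Rightarrow> nat \<Rightarrow> nat
    \<Rightarrow> real vec \<Rightarrow> real mat \<Rightarrow> real mat \<Rightarrow> real vec \<Rightarrow> real vec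
    \<Rightarrow> real vec \<Rightarrow> real vec \<Rightarrow> real vec \<Rightarrow> real \<Rightarrow> real mat \<Rightarrow> bool" where
  "W_step \<rho> \<Omega>l r c aa Wh Wt zz bb aT zT bT \<theta> Wn \<longleftrightarrow>
    (let G = grad_W \<rho> aa Wh zz bb;
         obj = (\<lambda>V. minner G (V - Wt) + \<theta> / 2 * (fnorm (V - Wt))\<^sup>2 + \<Omega>l V) in
     \<theta> > 0 \<and> Wn \<in> carrier_mat r c \<and> (\<forall>V\<in>carrier_mat r c. obj Wn \<le> obj V)
     \<and> phi \<rho> aa Wt zz bb + minner G (Wn - Wt) + \<theta> / 2 * (fnorm (Wn - Wt))\<^sup>2 \<ge> phi \<rho> aT Wn zT bT)"

definition b_step :: "real \<Rightarrow> real vec \<Rightarrow> real mat \<Rightarrow> real vec \<Rightarrow> real vec \<Rightarrow> real vec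
    \<Rightarrow> real vec \<Rightarrow> real mat \<Rightarrow> real vec \<Rightarrow> real \<Rightarrow> real vec \<Rightarrow> bool" where
  "b_step \<rho> aa WW zz bh bt aT WT zT \<xi> bn \<longleftrightarrow>
    (let G = grad_b \<rho> aa WW zz bh in
     \<xi> > 0 \<and> bn = bt - (1 / \<xi>) \<cdot>\<^sub>v G
     \<and> phi \<rho> aa WW zz bt + G \<bullet> (bn - bt) + \<xi> / 2 * (vnorm (bn - bt))\<^sup>2 \<ge> phi \<rho> aT WT zT bn)"

text \<open>z-update for a hidden layer (l < L): constrained by the current a_l^k.\<close>
definition z_step_hidden :: "real \<Rightarrow> (real \<Rightarrow> real) \<Rightarrow> real \<Rightarrow> nat
    \<Rightarrow> real vec \<Rightarrow> real mat \<Rightarrow> real vec \<Rightarrow> real vec \<Rightarrow> real vec \<Rightarrow> real vec \<Rightarrow> real vec \<Rightarrow> bool" where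
  "z_step_hidden \<rho> hl \<epsilon> m aa WW zh bb zt acon zn \<longleftrightarrow>
    (let G = grad_z \<rho> aa WW zh bb;
         obj = (\<lambda>v. G \<bullet> (v - zt) + \<rho> / 2 * (vnorm (v - zt))\<^sup>2) in
     zn \<in> carrier_vec m \<and> box hl \<epsilon> m zn acon
     \<and> (\<forall>v\<in>carrier_vec m. box hl \<epsilon> m v acon \<longrightarrow> obj zn \<le> obj v))"

definition z_step_last :: "real \<Rightarrow> (real vec \<Rightarrow> real) \<Rightarrow> nat
    \<Rightarrow> real vec \<Rightarrow> real mat \<Rightarrow> real vec \<Rightarrow> real vec \<Rightarrow> real vec \<Rightarrow> real vec \<Rightarrow> bool" where
  "z_step_last \<rho> R m aa WW zh bb zt zn \<longleftrightarrow>
    (let G = grad_z \<rho> aa WW zh bb;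
         obj = (\<lambda>v. G \<bullet> (v - zt) + \<rho> / 2 * (vnorm (v - zt))\<^sup>2 + R v) in
     zn \<in> carrier_vec m \<and> (\<forall>v\<in>carrier_vec m. obj zn \<le> obj v))"

text \<open>a-update (l < L): constrained by h_l(zc) with zc the (extrapolated) new z_l.\<close>
definition a_step :: "real \<Rightarrow> (real \<Rightarrow> real) \<Rightarrow> real \<Rightarrow> nat
    \<Rightarrow> real vec \<Rightarrow> real mat \<Rightarrow> real vec \<Rightarrow> real vec \<Rightarrow> real vec \<Rightarrow> real vec
    \<Rightarrow> real mat \<Rightarrow> real vec \<Rightarrow> real vec \<Rightarrow> real \<Rightarrow> real vec \<Rightarrow> bool" where
  "a_step \<rho> hl \<epsilon> m ah WW zz bb atl zc WT zT bT \<tau> an \<longleftrightarrow>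
    (let G = grad_a \<rho> ah WW zz bb;
         obj = (\<lambda>v. G \<bullet> (v - atl) + \<tau> / 2 * (vnorm (v - atl))\<^sup>2) in
     \<tau> > 0 \<and> an \<in> carrier_vec m \<and> box hl \<epsilon> m zc an
     \<and> (\<forall>v\<in>carrier_vec m. box hl \<epsilon> m zc v \<longrightarrow> obj an \<le> obj v)
     \<and> phi \<rho> atl WW zz bb + G \<bullet> (an - atl) + \<tau> / 2 * (vnorm (an - atl))\<^sup>2 \<ge> phi \<rho> an WT zT bT)"

text \<open>mix c u k: blocks with index < c are already at iteration k+1, the others at iteration k.\<close>
definition mix :: "nat \<Rightarrow> (nat \<Rightarrow> nat \<Rightarrow> 'a) \<Rightarrow> nat \<Rightarrow> nat \<Rightarrow> 'a" where
  "mix c u k = (\<lambda>l. if l < c then u (Suc k) l else u k l)"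

text \<open>Iterates are indexed k = 0,1,...; u^{k-1} for k = 0 is u^0 (natural subtraction), i.e. the
  extrapolation at the first iteration is void.  Parameters th, xi, ta :: nat => nat => real
  with th (Suc k) l = theta_l^{k+1} etc.  Each block update is the accelerated one if it strictly
  decreases F, otherwise (safeguard) the non-accelerated recomputation.\<close>
definition tiam :: "nat \<Rightarrow> (nat \<Rightarrow> nat) \<Rightarrow> real vec \<Rightarrow> (real vec \<Rightarrow> real) \<Rightarrow> (nat \<Rightarrow> real mat \<Rightarrow> real)
    \<Rightarrow> (nat \<Rightarrow> real \<Rightarrow> real) \<Rightarrow> real \<Rightarrow> real \<Rightarrow> real \<Rightarrow> real \<Rightarrow> real
    \<Rightarrow> (nat \<Rightarrow> nat \<Rightarrow> real mat) \<Rightarrow> (nat \<Rightarrow> nat \<Rightarrow> real vec) \<Rightarrow> (nat \<Rightarrow> nat \<Rightarrow> real vec)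
    \<Rightarrow> (nat \<Rightarrow> nat \<Rightarrow> real vec)
    \<Rightarrow> (nat \<Rightarrow> nat \<Rightarrow> real) \<Rightarrow> (nat \<Rightarrow> nat \<Rightarrow> real) \<Rightarrow> (nat \<Rightarrow> nat \<Rightarrow> real) \<Rightarrow> bool" where
  "tiam L n x R \<Omega> h \<rho> \<epsilon> p1 p2 p3 Ws zs as bs th xi ta \<longleftrightarrow>
   (\<forall>k. wf_state L n (Ws k) (zs k) (as k) (bs k)) \<and>
   (\<forall>k. \<forall>l\<in>{1..L}.
     (let F = Fobj L x \<rho> R \<Omega>;
          A = (\<lambda>j i. act x (as j) i);
          \<comment> \<open>extrapolated a_{l-1}^{k+1}\<close>
          abar = ext_v p3 (A (Suc k) (l - 1)) (A k (l - 1));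
          anew = A (Suc k) (l - 1);
          \<comment> \<open>W_l update\<close>
          Wacc = (\<lambda>\<theta> Wn. W_step \<rho> (\<Omega> l) (n l) (n (l - 1)) abar
                   (ext_m p2 (Ws k l) (Ws (k - 1) l)) (ext_m p1 (Ws k l) (Ws (k - 1) l))
                   (ext_v p3 (zs k l) (zs (k - 1) l)) (ext_v p3 (bs k l) (bs (k - 1) l))
                   anew (zs k l) (bs k l) \<theta> Wn);
          Wnon = (\<lambda>\<theta> Wn. W_step \<rho> (\<Omega> l) (n l) (n (l - 1)) anew (Ws k l) (Ws k l)
                   (zs k l) (bs k l) anew (zs k l) (bs k l) \<theta> Wn);
          FW0 = F (mix l Ws k) (mix l zs k) (mix l as k) (mix l bs k);
          FW1 = (\<lambda>Wc. F ((mix l Ws k)(l := Wc)) (mix l zs k) (mix l as k) (mix l bs k));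
          \<comment> \<open>b_l update\<close>
          bacc = (\<lambda>\<xi> bn. b_step \<rho> abar (ext_m p3 (Ws (Suc k) l) (Ws k l))
                   (ext_v p3 (zs k l) (zs (k - 1) l))
                   (ext_v p2 (bs k l) (bs (k - 1) l)) (ext_v p1 (bs k l) (bs (k - 1) l))
                   anew (Ws (Suc k) l) (zs k l) \<xi> bn);
          bnon = (\<lambda>\<xi> bn. b_step \<rho> anew (Ws (Suc k) l) (zs k l) (bs k l) (bs k l)
                   anew (Ws (Suc k) l) (zs k l) \<xi> bn);
          Fb0 = F (mix (Suc l) Ws k) (mix l zs k) (mix l as k) (mix l bs k);
          Fb1 = (\<lambda>bc. F (mix (Suc l) Ws k) (mix l zs k) (mix l as k) ((mix l bs k)(l := bc)));
          \<comment> \<open>z_l update\<close>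
          zWW = ext_m p3 (Ws (Suc k) l) (Ws k l);
          zbb = ext_v p3 (bs (Suc k) l) (bs k l);
          zh = ext_v p2 (zs k l) (zs (k - 1) l);
          zt = ext_v p1 (zs k l) (zs (k - 1) l);
          zacc = (\<lambda>zn. if l < L then z_step_hidden \<rho> (h l) \<epsilon> (n l) abar zWW zh zbb zt (as k l) zn
                                 else z_step_last \<rho> R (n l) abar zWW zh zbb zt zn);
          znon = (\<lambda>zn. if l < L then z_step_hidden \<rho> (h l) \<epsilon> (n l) anew (Ws (Suc k) l) (zs k l)
                                        (bs (Suc k) l) (zs k l) (as k l) zn
                                 else z_step_last \<rho> R (n l) anew (Ws (Suc k) l) (zs k l)
                                        (bs (Suc k) l) (zs k l) zn);
          Fz0 = F (mix (Suc l) Ws k) (mix l zs k) (mix l as k) (mix (Suc l) bs k);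
          Fz1 = (\<lambda>zc. F (mix (Suc l) Ws k) ((mix l zs k)(l := zc)) (mix l as k) (mix (Suc l) bs k));
          \<comment> \<open>a_l update (l < L)\<close>
          aacc = (\<lambda>\<tau> an. a_step \<rho> (h l) \<epsilon> (n l)
                   (ext_v p2 (as k l) (as (k - 1) l))
                   (ext_m p3 (Ws k (Suc l)) (Ws (k - 1) (Suc l)))
                   (ext_v p3 (zs k (Suc l)) (zs (k - 1) (Suc l)))
                   (ext_v p3 (bs k (Suc l)) (bs (k - 1) (Suc l)))
                   (ext_v p1 (as k l) (as (k - 1) l))
                   (ext_v p3 (zs (Suc k) l) (zs k l))
                   (Ws k (Suc l)) (zs k (Suc l)) (bs k (Suc l)) \<tau> an);
          anon = (\<lambda>\<tau> an. a_step \<rho> (h l) \<epsilon> (n l) (as k l) (Ws k (Suc l)) (zs k (Suc l))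
                   (bs k (Suc l)) (as k l) (zs (Suc k) l)
                   (Ws k (Suc l)) (zs k (Suc l)) (bs k (Suc l)) \<tau> an);
          Fa0 = F (mix (Suc l) Ws k) (mix (Suc l) zs k) (mix l as k) (mix (Suc l) bs k);
          Fa1 = (\<lambda>ac. F (mix (Suc l) Ws k) (mix (Suc l) zs k) ((mix l as k)(l := ac)) (mix (Suc l) bs k))
      in
       ((Wacc (th (Suc k) l) (Ws (Suc k) l) \<and> FW1 (Ws (Suc k) l) < FW0)
        \<or> ((\<exists>\<theta>' Wc. Wacc \<theta>' Wc \<and> \<not> FW1 Wc < FW0) \<and> Wnon (th (Suc k) l) (Ws (Suc k) l)))
     \<and> ((bacc (xi (Suc k) l) (bs (Suc k) l) \<and> Fb1 (bs (Suc k) l) < Fb0)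
        \<or> ((\<exists>\<xi>' bc. bacc \<xi>' bc \<and> \<not> Fb1 bc < Fb0) \<and> bnon (xi (Suc k) l) (bs (Suc k) l)))
     \<and> ((zacc (zs (Suc k) l) \<and> Fz1 (zs (Suc k) l) < Fz0)
        \<or> ((\<exists>zc. zacc zc \<and> \<not> Fz1 zc < Fz0) \<and> znon (zs (Suc k) l)))
     \<and> (l < L \<longrightarrow>
        ((aacc (ta (Suc k) l) (as (Suc k) l) \<and> Fa1 (as (Suc k) l) < Fa0)
        \<or> ((\<exists>\<tau>' ac. aacc \<tau>' ac \<and> \<not> Fa1 ac < Fa0) \<and> anon (ta (Suc k) l) (as (Suc k) l))))))"

definition pts_v :: "real \<Rightarrow> real \<Rightarrow> real \<Rightarrow> (nat \<Rightarrow> real vec) \<Rightarrow> real vec set" where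
  "pts_v p1 p2 p3 u = range u \<union> {ext_v p (u k) (u (k - 1)) | k p. p \<in> {p1, p2, p3}}"

definition pts_m :: "real \<Rightarrow> real \<Rightarrow> real \<Rightarrow> (nat \<Rightarrow> real mat) \<Rightarrow> real mat set" where
  "pts_m p1 p2 p3 u = range u \<union> {ext_m p (u k) (u (k - 1)) | k p. p \<in> {p1, p2, p3}}"

definition bounded_tup :: "tup set \<Rightarrow> bool" where
  "bounded_tup S \<longleftrightarrow> (\<exists>B. \<forall>u\<in>S. tup_norm u \<le> B)"

definition grad_lipschitz_on :: "real \<Rightarrow> real \<Rightarrow> tup set \<Rightarrow> bool" where
  "grad_lipschitz_on \<rho> M S \<longleftrightarrow> (\<forall>u\<in>S. \<forall>v\<in>S. grad_dist \<rho> u v \<le> M * tup_dist u v)"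

end

theory Submission
  imports Defs "HOL-Analysis.L2_Norm"
begin


lemma vnorm_L2: "vnorm v = L2_set (\<lambda>i. v $ i) {..<dim_vec v}"
  unfolding vnorm_def L2_set_def scalar_prod_def
  by (simp add: power2_eq_square atLeast0LessThan)

lemma vnorm_nonneg[simp]: "0 \<le> vnorm v"
  by (simp add: vnorm_L2)

lemma minner_sum: "A \<in> carrier_mat r c \<Longrightarrow>
   minner A B = (\<Sum>p\<in>{..<r}\<times>{..<c}. A $$ p * B $$ p)"
  unfolding minner_def by (simp add: sum.cartesian_product)

lemma fnorm_L2: "A \<in> carrier_mat r c \<Longrightarrow> fnorm A = L2_set (\<lambda>p. A $$ p) ({..<r}\<times>{..<c})"
  unfolding fnorm_def L2_set_def by (simp add: minner_sum power2_eq_square)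

lemma fnorm_nonneg[simp]: "0 \<le> fnorm A"
  using fnorm_L2[of A "dim_row A" "dim_col A"] by simp

lemma ext_v_carrier: "u \<in> carrier_vec m \<Longrightarrow> w \<in> carrier_vec m \<Longrightarrow> ext_v p u w \<in> carrier_vec m"
  unfolding ext_v_def by auto

lemma ext_m_carrier: "u \<in> carrier_mat r c \<Longrightarrow> w \<in> carrier_mat r c \<Longrightarrow> ext_m p u w \<in> carrier_mat r c"
  unfolding ext_m_def by auto

lemma vnorm_ext:
  assumes "u \<in> carrier_vec m" "v \<in> carrier_vec m" "w \<in> carrier_vec m"
  shows "vnorm (u - ext_v p v w) \<le> vnorm (u - v) + \<bar>p\<bar> * vnorm (v - w)"
proof -
  have "vnorm (u - ext_v p v w) = L2_set (\<lambda>i. (u$i - v$i) + (-p) * (v$i - w$i)) {..<m}"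
    using assms unfolding vnorm_L2 ext_v_def
    by (intro L2_set_cong) (auto simp: algebra_simps)
  also have "\<dots> \<le> L2_set (\<lambda>i. (u$i - v$i)) {..<m} + L2_set (\<lambda>i. (-p) * (v$i - w$i)) {..<m}"
    by (rule L2_set_triangle_ineq)
  also have "L2_set (\<lambda>i. (-p) * (v$i - w$i)) {..<m} = L2_set (\<lambda>i. \<bar>p\<bar> * (v$i - w$i)) {..<m}"
    unfolding L2_set_def by (simp add: power_mult_distrib)
  also have "\<dots> = \<bar>p\<bar> * vnorm (v - w)"
    using assms by (simp add: L2_set_right_distrib vnorm_L2) (auto intro!: L2_set_cong)
  also have "L2_set (\<lambda>i. (u$i - v$i)) {..<m} = vnorm (u - v)"
    using assms by (simp add: vnorm_L2) (auto intro!: L2_set_cong)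
  finally show ?thesis by simp
qed

lemma fnorm_ext:
  assumes "u \<in> carrier_mat r c" "v \<in> carrier_mat r c" "w \<in> carrier_mat r c"
  shows "fnorm (u - ext_m p v w) \<le> fnorm (u - v) + \<bar>p\<bar> * fnorm (v - w)"
proof -
  let ?I = "{..<r}\<times>{..<c}"
  have "fnorm (u - ext_m p v w) = L2_set (\<lambda>i. (u$$i - v$$i) + (-p) * (v$$i - w$$i)) ?I"
    using assms unfolding ext_m_def
    by (subst fnorm_L2[of _ r c]) (auto intro!: L2_set_cong simp: algebra_simps)
  also have "\<dots> \<le> L2_set (\<lambda>i. (u$$i - v$$i)) ?I + L2_set (\<lambda>i. (-p) * (v$$i - w$$i)) ?I"
    by (rule L2_set_triangle_ineq)
  also have "L2_set (\<lambda>i. (-p) * (v$$i - w$$i)) ?I = L2_set (\<lambda>i. \<bar>p\<bar> * (v$$i - w$$i)) ?I"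
    unfolding L2_set_def by (simp add: power_mult_distrib)
  also have "\<dots> = \<bar>p\<bar> * fnorm (v - w)"
    using assms by (subst fnorm_L2[of _ r c]) (auto simp: L2_set_right_distrib intro!: L2_set_cong)
  also have "L2_set (\<lambda>i. (u$$i - v$$i)) ?I = fnorm (u - v)"
    using assms by (subst fnorm_L2[of _ r c]) (auto intro!: L2_set_cong)
  finally show ?thesis by simp
qed

lemma fnorm_tri3:
  assumes "A \<in> carrier_mat r c" "B \<in> carrier_mat r c" "X \<in> carrier_mat r c" "Y \<in> carrier_mat r c"
    "0 \<le> t"
  shows "fnorm (A - B - t \<cdot>\<^sub>m (X - Y)) \<le> fnorm (A - B) + t * fnorm (X - Y)"
proof -
  let ?I = "{..<r}\<times>{..<c}"
  have "fnorm (A - B - t \<cdot>\<^sub>m (X - Y)) = L2_set (\<lambda>i. (A$$i - B$$i) + (-t) * (X$$i - Y$$i)) ?I"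
    using assms by (subst fnorm_L2[of _ r c]) (auto intro!: L2_set_cong simp: algebra_simps)
  also have "\<dots> \<le> L2_set (\<lambda>i. (A$$i - B$$i)) ?I + L2_set (\<lambda>i. (-t) * (X$$i - Y$$i)) ?I"
    by (rule L2_set_triangle_ineq)
  also have "L2_set (\<lambda>i. (-t) * (X$$i - Y$$i)) ?I = L2_set (\<lambda>i. t * (X$$i - Y$$i)) ?I"
    unfolding L2_set_def by (simp add: power_mult_distrib)
  also have "\<dots> = t * fnorm (X - Y)"
    using assms by (subst fnorm_L2[of _ r c]) (auto simp: L2_set_right_distrib intro!: L2_set_cong)
  also have "L2_set (\<lambda>i. (A$$i - B$$i)) ?I = fnorm (A - B)"
    using assms by (subst fnorm_L2[of _ r c]) (auto intro!: L2_set_cong)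
  finally show ?thesis by simp
qed

lemma sqrt4_le: "0 \<le> a \<Longrightarrow> 0 \<le> b \<Longrightarrow> 0 \<le> c \<Longrightarrow> 0 \<le> d \<Longrightarrow>
   sqrt (a\<^sup>2 + b\<^sup>2 + c\<^sup>2 + d\<^sup>2) \<le> a + b + c + d"
  by (rule real_le_lsqrt) (auto simp: power2_eq_square algebra_simps)

lemma grad_W_carrier: "grad_W \<rho> a W z b \<in> carrier_mat (dim_vec b) (dim_vec a)"
  unfolding grad_W_def resid_def by auto

lemma fnorm_sq: "A \<in> carrier_mat r c \<Longrightarrow> (fnorm A)\<^sup>2 = (\<Sum>p\<in>{..<r}\<times>{..<c}. (A $$ p)\<^sup>2)"
  by (simp add: fnorm_L2 L2_set_def sum_nonneg)

lemma lim_arg: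
  fixes a b c :: real
  assumes h: "\<forall>t. 0 < t \<and> t \<le> 1 \<longrightarrow> b - t * c \<le> a" and c: "0 \<le> c"
  shows "b \<le> a"
proof (rule ccontr)
  assume "\<not> b \<le> a"
  hence d: "0 < b - a" by simp
  define t where "t = min 1 ((b - a) / (2 * (c + 1)))"
  have t0: "0 < t" "t \<le> 1" using d c by (auto simp: t_def)
  have "t \<le> (b - a) / (2 * (c + 1))" unfolding t_def by simp
  hence "t * (2 * (c + 1)) \<le> b - a" using c by (simp add: pos_le_divide_eq)
  hence "t * (c + 1) \<le> (b - a) / 2" by (simp add: algebra_simps)
  moreover have "t * c < t * (c + 1)" using t0 by (simp add: algebra_simps)
  moreover have "(b - a) / 2 < b - a" using d by simp
  ultimately have "t * c < b - a" by (meson less_le_trans order.strict_trans)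
  with h t0 show False by force
qed

lemma W_opt:
  fixes \<Omega> :: "real mat \<Rightarrow> real"
  assumes conv: "convex_on_mat r c \<Omega>" and th: "\<theta> > 0"
    and X: "X \<in> carrier_mat r c" and Wt: "Wt \<in> carrier_mat r c" and G: "G \<in> carrier_mat r c"
    and Y: "Y \<in> carrier_mat r c"
    and opt: "\<forall>V\<in>carrier_mat r c. minner G (X - Wt) + \<theta> / 2 * (fnorm (X - Wt))\<^sup>2 + \<Omega> X
                 \<le> minner G (V - Wt) + \<theta> / 2 * (fnorm (V - Wt))\<^sup>2 + \<Omega> V"
  shows "\<Omega> X - minner (G + \<theta> \<cdot>\<^sub>m (X - Wt)) (Y - X) \<le> \<Omega> Y"
proof -
  let ?I = "{..<r}\<times>{..<c}"
  define d where "d p = Y $$ p - X $$ p" for p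
  define e where "e p = X $$ p - Wt $$ p" for p
  define S1 where "S1 = (\<Sum>p\<in>?I. G $$ p * d p)"
  define S2 where "S2 = (\<Sum>p\<in>?I. e p * d p)"
  define S3 where "S3 = (\<Sum>p\<in>?I. (d p)\<^sup>2)"
  have S3: "0 \<le> S3" unfolding S3_def by (simp add: sum_nonneg)
  have mi: "minner (G + \<theta> \<cdot>\<^sub>m (X - Wt)) (Y - X) = S1 + \<theta> * S2"
  proof -
    have "minner (G + \<theta> \<cdot>\<^sub>m (X - Wt)) (Y - X) = (\<Sum>p\<in>?I. G $$ p * d p + \<theta> * (e p * d p))"
      using X Wt G Y
      by (subst minner_sum[of _ r c]) (auto intro!: sum.cong simp: d_def e_def algebra_simps)
    thus ?thesis by (simp add: S1_def S2_def sum.distrib sum_distrib_left)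
  qed
  have key: "\<Omega> X - (S1 + \<theta> * S2) - t * (\<theta> / 2 * S3) \<le> \<Omega> Y" if t: "0 < t" "t \<le> 1" for t
  proof -
    define V where "V = t \<cdot>\<^sub>m Y + (1 - t) \<cdot>\<^sub>m X"
    have V: "V \<in> carrier_mat r c" using X Y by (simp add: V_def)
    have cv: "\<Omega> V \<le> t * \<Omega> Y + (1 - t) * \<Omega> X"
      using conv X Y t unfolding convex_on_mat_def V_def by auto
    have m1: "minner G (V - Wt) = minner G (X - Wt) + t * S1"
    proof -
      have "minner G (V - Wt) = (\<Sum>p\<in>?I. G $$ p * (X $$ p - Wt $$ p) + t * (G $$ p * d p))"
        using X Wt G Y
        by (subst minner_sum[of _ r c]) (auto intro!: sum.cong simp: V_def d_def algebra_simps)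
      moreover have "minner G (X - Wt) = (\<Sum>p\<in>?I. G $$ p * (X $$ p - Wt $$ p))"
        using X Wt G by (subst minner_sum[of _ r c]) (auto intro!: sum.cong)
      ultimately show ?thesis by (simp add: S1_def sum.distrib sum_distrib_left)
    qed
    have f1: "(fnorm (V - Wt))\<^sup>2 = (fnorm (X - Wt))\<^sup>2 + 2 * t * S2 + t\<^sup>2 * S3"
    proof -
      have "(fnorm (V - Wt))\<^sup>2 = (\<Sum>p\<in>?I. (e p)\<^sup>2 + 2 * t * (e p * d p) + t\<^sup>2 * (d p)\<^sup>2)"
        using X Wt V Y
        by (subst fnorm_sq[of _ r c]) (auto intro!: sum.cong simp: V_def d_def e_def algebra_simps power2_eq_square)
      moreover have "(fnorm (X - Wt))\<^sup>2 = (\<Sum>p\<in>?I. (e p)\<^sup>2)"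
        using X Wt by (subst fnorm_sq[of _ r c]) (auto intro!: sum.cong simp: e_def)
      ultimately show ?thesis by (simp add: S2_def S3_def sum.distrib sum_distrib_left)
    qed
    have o: "minner G (X - Wt) + \<theta> / 2 * (fnorm (X - Wt))\<^sup>2 + \<Omega> X
                 \<le> minner G (V - Wt) + \<theta> / 2 * (fnorm (V - Wt))\<^sup>2 + \<Omega> V"
      using opt V by blast
    hence "\<Omega> X \<le> t * S1 + \<theta> / 2 * (2 * t * S2 + t\<^sup>2 * S3) + t * \<Omega> Y + (1 - t) * \<Omega> X"
      using m1 f1 cv by (simp add: algebra_simps)
    hence "t * \<Omega> X \<le> t * (S1 + \<theta> * S2 + t * (\<theta> / 2 * S3) + \<Omega> Y)"
      by (simp add: algebra_simps power2_eq_square)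
    hence "\<Omega> X \<le> S1 + \<theta> * S2 + t * (\<theta> / 2 * S3) + \<Omega> Y"
      using t by (simp add: mult_le_cancel_left)
    thus ?thesis by simp
  qed
  have "\<Omega> X - (S1 + \<theta> * S2) \<le> \<Omega> Y"
    by (rule lim_arg[of _ "\<theta> / 2 * S3"]) (use key th S3 in auto)
  thus ?thesis using mi by simp
qed

lemma vnorm_sq: "v \<in> carrier_vec m \<Longrightarrow> (vnorm v)\<^sup>2 = (\<Sum>i<m. (v $ i)\<^sup>2)"
  by (simp add: vnorm_L2 L2_set_def sum_nonneg)

lemma resid_carrier: "b \<in> carrier_vec r \<Longrightarrow> resid a W z b \<in> carrier_vec r"
  unfolding resid_def carrier_vec_def by simp

lemma resid_idx:
  assumes "a \<in> carrier_vec c" "W \<in> carrier_mat r c" "z \<in> carrier_vec r" "b \<in> carrier_vec r" "i < r"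
  shows "resid a W z b $ i = z $ i - (\<Sum>j<c. W $$ (i, j) * a $ j) - b $ i"
  using assms unfolding resid_def
  by (auto simp: scalar_prod_def atLeast0LessThan intro!: sum.cong)

lemma phi_W_ineq:
  assumes rho: "\<rho> > 0" and a: "a \<in> carrier_vec c" and z: "z \<in> carrier_vec r" and b: "b \<in> carrier_vec r"
    and X: "X \<in> carrier_mat r c" and Y: "Y \<in> carrier_mat r c"
  shows "phi \<rho> a X z b + minner (grad_W \<rho> a X z b) (Y - X) \<le> phi \<rho> a Y z b"
proof -
  define rr where "rr i = resid a X z b $ i" for i
  define e where "e i = (\<Sum>j<c. (Y $$ (i, j) - X $$ (i, j)) * a $ j)" for i
  have rY: "resid a Y z b $ i = rr i - e i" if "i < r" for i
    using resid_idx[OF a Y z b that] resid_idx[OF a X z b that] unfolding rr_def e_def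
    by (simp add: algebra_simps sum_subtractf)
  have pX: "phi \<rho> a X z b = \<rho> / 2 * (\<Sum>i<r. (rr i)\<^sup>2)"
    unfolding phi_def rr_def using b by (simp add: vnorm_sq[OF resid_carrier])
  have pY: "phi \<rho> a Y z b = \<rho> / 2 * (\<Sum>i<r. (rr i - e i)\<^sup>2)"
    unfolding phi_def using b rY by (simp add: vnorm_sq[OF resid_carrier])
  have gc: "grad_W \<rho> a X z b \<in> carrier_mat r c"
    using grad_W_carrier[of \<rho> a X z b] a b by simp
  have mi: "minner (grad_W \<rho> a X z b) (Y - X) = - \<rho> * (\<Sum>i<r. rr i * e i)"
  proof -
    have "minner (grad_W \<rho> a X z b) (Y - X) = (\<Sum>i<r. \<Sum>j<c. (- \<rho> * (rr i * a $ j)) * (Y $$ (i,j) - X $$ (i,j)))"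
      unfolding minner_def using gc X Y a b
      by (auto intro!: sum.cong simp: grad_W_def rr_def resid_carrier)
    also have "\<dots> = (\<Sum>i<r. - \<rho> * (rr i * e i))"
      unfolding e_def by (auto intro!: sum.cong simp: sum_distrib_left algebra_simps)
    finally show ?thesis by (simp add: sum_distrib_left)
  qed
  have "(\<Sum>i<r. (rr i)\<^sup>2) - 2 * (\<Sum>i<r. rr i * e i) \<le> (\<Sum>i<r. (rr i - e i)\<^sup>2)"
  proof -
    have "(\<Sum>i<r. (rr i)\<^sup>2) - 2 * (\<Sum>i<r. rr i * e i) = (\<Sum>i<r. (rr i)\<^sup>2 - 2 * (rr i * e i))"
      by (simp add: sum_subtractf sum_distrib_left)
    also have "\<dots> \<le> (\<Sum>i<r. (rr i - e i)\<^sup>2)"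
      by (rule sum_mono) (simp add: power2_eq_square algebra_simps)
    finally show ?thesis .
  qed
  hence "\<rho> / 2 * ((\<Sum>i<r. (rr i)\<^sup>2) - 2 * (\<Sum>i<r. rr i * e i)) \<le> \<rho> / 2 * (\<Sum>i<r. (rr i - e i)\<^sup>2)"
    using rho by (simp add: mult_left_mono)
  thus ?thesis using pX pY mi by (simp add: algebra_simps)
qed

lemma sum_upd:
  fixes f g :: "nat \<Rightarrow> real"
  assumes "finite A" "l \<in> A" "\<And>i. i \<in> A - {l} \<Longrightarrow> f i = g i"
  shows "sum f A = sum g A - g l + f l"
proof -
  have "sum f (A - {l}) = sum g (A - {l})" by (rule sum.cong) (use assms(3) in auto)
  thus ?thesis using sum.remove[OF assms(1,2), of f] sum.remove[OF assms(1,2), of g] by simp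
qed

lemma Fobj_upd:
  assumes l: "l \<in> {1..L}"
  shows "Fobj L x \<rho> R \<Omega> (W(l := Y)) z a b = Fobj L x \<rho> R \<Omega> W z a b - \<Omega> l (W l)
     - phi \<rho> (act x a (l - 1)) (W l) (z l) (b l) + \<Omega> l Y + phi \<rho> (act x a (l - 1)) Y (z l) (b l)"
proof -
  have s1: "(\<Sum>i=1..L. \<Omega> i ((W(l := Y)) i)) = (\<Sum>i=1..L. \<Omega> i (W i)) - \<Omega> l (W l) + \<Omega> l Y"
  proof -
    have "(\<Sum>i=1..L. \<Omega> i ((W(l := Y)) i)) = (\<Sum>i=1..L. \<Omega> i (W i)) - \<Omega> l (W l) + \<Omega> l ((W(l := Y)) l)"
      by (rule sum_upd[where l=l and g="\<lambda>i. \<Omega> i (W i)"]) (use l in auto)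
    thus ?thesis by simp
  qed
  have s2: "(\<Sum>i=1..L. phi \<rho> (act x a (i - 1)) ((W(l := Y)) i) (z i) (b i)) =
      (\<Sum>i=1..L. phi \<rho> (act x a (i - 1)) (W i) (z i) (b i)) - phi \<rho> (act x a (l - 1)) (W l) (z l) (b l)
        + phi \<rho> (act x a (l - 1)) Y (z l) (b l)"
  proof -
    have "(\<Sum>i=1..L. phi \<rho> (act x a (i - 1)) ((W(l := Y)) i) (z i) (b i)) =
      (\<Sum>i=1..L. phi \<rho> (act x a (i - 1)) (W i) (z i) (b i)) - phi \<rho> (act x a (l - 1)) (W l) (z l) (b l)
        + phi \<rho> (act x a (l - 1)) ((W(l := Y)) l) (z l) (b l)"
      by (rule sum_upd[where l=l and g="\<lambda>i. phi \<rho> (act x a (i - 1)) (W i) (z i) (b i)"]) (use l in auto)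
    thus ?thesis by simp
  qed
  show ?thesis unfolding Fobj_def s1 s2 by linarith
qed
lemma layer:
  assumes WS: "W_step \<rho> \<Omega>l r c aa Wh Wt zz bb aT zT bT \<theta> X"
    and conv: "convex_on_mat r c \<Omega>l" and rho: "\<rho> > 0"
    and aa: "aa \<in> carrier_vec c" and Wh: "Wh \<in> carrier_mat r c" and Wt: "Wt \<in> carrier_mat r c"
    and bb: "bb \<in> carrier_vec r"
    and a': "a' \<in> carrier_vec c" and z': "z' \<in> carrier_vec r" and b': "b' \<in> carrier_vec r"
  shows "\<exists>g \<in> carrier_mat r c. (\<forall>Y\<in>carrier_mat r c.
            \<Omega>l X + phi \<rho> a' X z' b' + minner g (Y - X) \<le> \<Omega>l Y + phi \<rho> a' Y z' b')
          \<and> fnorm g \<le> fnorm (grad_W \<rho> a' X z' b' - grad_W \<rho> aa Wh zz bb) + \<theta> * fnorm (X - Wt)"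
proof -
  define G where "G = grad_W \<rho> aa Wh zz bb"
  define Gn where "Gn = grad_W \<rho> a' X z' b'"
  have G: "G \<in> carrier_mat r c" using grad_W_carrier[of \<rho> aa Wh zz bb] aa bb by (simp add: G_def)
  have Gn: "Gn \<in> carrier_mat r c" using grad_W_carrier[of \<rho> a' X z' b'] a' b' by (simp add: Gn_def)
  have WS': "\<theta> > 0 \<and> X \<in> carrier_mat r c \<and> (\<forall>V\<in>carrier_mat r c. minner G (X - Wt) + \<theta> / 2 * (fnorm (X - Wt))\<^sup>2 + \<Omega>l X
                 \<le> minner G (V - Wt) + \<theta> / 2 * (fnorm (V - Wt))\<^sup>2 + \<Omega>l V)"
    using WS unfolding W_step_def Let_def G_def by (elim conjE) (intro conjI; assumption)
  have th: "\<theta> > 0" by (rule conjunct1[OF WS'])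
  have X: "X \<in> carrier_mat r c" by (rule conjunct1[OF conjunct2[OF WS']])
  have opt: "\<forall>V\<in>carrier_mat r c. minner G (X - Wt) + \<theta> / 2 * (fnorm (X - Wt))\<^sup>2 + \<Omega>l X
                 \<le> minner G (V - Wt) + \<theta> / 2 * (fnorm (V - Wt))\<^sup>2 + \<Omega>l V"
    by (rule conjunct2[OF conjunct2[OF WS']])
  define g where "g = Gn - G - \<theta> \<cdot>\<^sub>m (X - Wt)"
  have gc: "g \<in> carrier_mat r c" unfolding g_def
    by (intro minus_carrier_mat smult_carrier_mat) (rule Wt)
  show ?thesis
  proof (intro bexI[of _ g] conjI ballI)
    fix Y :: "real mat" assume Y: "Y \<in> carrier_mat r c"
    have "minner g (Y - X) = minner Gn (Y - X) - minner (G + \<theta> \<cdot>\<^sub>m (X - Wt)) (Y - X)"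
    proof -
      have hc: "G + \<theta> \<cdot>\<^sub>m (X - Wt) \<in> carrier_mat r c"
        by (intro add_carrier_mat smult_carrier_mat minus_carrier_mat) (rule Wt)
      have "minner g (Y - X) = (\<Sum>p\<in>{..<r}\<times>{..<c}. Gn $$ p * (Y - X) $$ p - (G + \<theta> \<cdot>\<^sub>m (X - Wt)) $$ p * (Y - X) $$ p)"
        unfolding minner_sum[OF gc] using Gn G X Wt Y
        by (intro sum.cong) (auto simp: g_def left_diff_distrib distrib_right)
      thus ?thesis unfolding minner_sum[OF Gn] minner_sum[OF hc] by (simp add: sum_subtractf)
    qed
    moreover have "\<Omega>l X - minner (G + \<theta> \<cdot>\<^sub>m (X - Wt)) (Y - X) \<le> \<Omega>l Y"
      by (rule W_opt[OF conv th X Wt G Y opt])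
    moreover have "phi \<rho> a' X z' b' + minner Gn (Y - X) \<le> phi \<rho> a' Y z' b'"
      unfolding Gn_def by (rule phi_W_ineq[OF rho a' z' b' X Y])
    ultimately show "\<Omega>l X + phi \<rho> a' X z' b' + minner g (Y - X) \<le> \<Omega>l Y + phi \<rho> a' Y z' b'"
      by linarith
  next
    show "fnorm g \<le> fnorm (grad_W \<rho> a' X z' b' - grad_W \<rho> aa Wh zz bb) + \<theta> * fnorm (X - Wt)"
      unfolding g_def Gn_def[symmetric] G_def[symmetric]
      by (rule fnorm_tri3[OF Gn G X Wt]) (use th in simp)
  qed (rule gc)
qed


lemma vnorm_self: "vnorm (v - v) = 0"
  unfolding vnorm_L2 by (rule L2_set_0') simp

lemma fnorm_self: "fnorm (A - A) = 0"
  unfolding fnorm_def minner_def by simp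

lemma sqrt_ge2: "0 \<le> y \<Longrightarrow> 0 \<le> p \<Longrightarrow> 0 \<le> q \<Longrightarrow> 0 \<le> s \<Longrightarrow> y \<le> sqrt (p + y\<^sup>2 + q + s)"
  by (rule real_le_rsqrt) simp

lemma L2_7:
  "L2_set (\<lambda>i. f1 i + f2 i + f3 i + f4 i + f5 i + f6 i + f7 i) A
   \<le> L2_set f1 A + L2_set f2 A + L2_set f3 A + L2_set f4 A + L2_set f5 A + L2_set f6 A + L2_set f7 A"
  using L2_set_triangle_ineq[of "\<lambda>i. f1 i + f2 i + f3 i + f4 i + f5 i + f6 i" f7 A]
    L2_set_triangle_ineq[of "\<lambda>i. f1 i + f2 i + f3 i + f4 i + f5 i" f6 A]
    L2_set_triangle_ineq[of "\<lambda>i. f1 i + f2 i + f3 i + f4 i" f5 A]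
    L2_set_triangle_ineq[of "\<lambda>i. f1 i + f2 i + f3 i" f4 A]
    L2_set_triangle_ineq[of "\<lambda>i. f1 i + f2 i" f3 A]
    L2_set_triangle_ineq[of "f1" f2 A]
  by linarith



theorem lemma4:
  fixes L :: nat and n :: "nat \<Rightarrow> nat" and x :: "real vec"
    and R :: "real vec \<Rightarrow> real" and \<Omega> :: "nat \<Rightarrow> real mat \<Rightarrow> real"
    and h :: "nat \<Rightarrow> real \<Rightarrow> real"
    and \<rho> \<epsilon> p1 p2 p3 M :: real
    and Ws :: "nat \<Rightarrow> nat \<Rightarrow> real mat" and zs as bs :: "nat \<Rightarrow> nat \<Rightarrow> real vec"
    and th xi ta :: "nat \<Rightarrow> nat \<Rightarrow> real"
    and k :: nat
  assumes "L \<ge> 1"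
    and "x \<in> carrier_vec (n 0)"
    and "\<rho> > 0" and "\<epsilon> > 0"
    and "0 \<le> p1" "p1 < 1" "0 \<le> p2" "p2 < 1" "0 \<le> p3" "p3 < 1"
    and "\<forall>l\<in>{1..L-1}. continuous_on UNIV (h l)"
    and "convex_on_vec (n L) R" and "cont_on_vec (n L) R"
    and "\<forall>l\<in>{1..L}. convex_on_mat (n l) (n (l - 1)) (\<Omega> l) \<and> cont_on_mat (n l) (n (l - 1)) (\<Omega> l)
                     \<and> (\<forall>V\<in>carrier_mat (n l) (n (l - 1)). \<Omega> l V \<ge> 0)"
    and "coercive_on_feasible L n h \<epsilon> (Fobj L x \<rho> R \<Omega>)"
    and "tiam L n x R \<Omega> h \<rho> \<epsilon> p1 p2 p3 Ws zs as bs th xi ta"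
    and "M > 0"
    and "\<forall>l\<in>{1..L}. \<exists>S. bounded_tup S \<and> grad_lipschitz_on \<rho> M S \<and>
           {(a, W, z, b) | a W z b.
              a \<in> pts_v p1 p2 p3 (\<lambda>j. act x (as j) (l - 1)) \<and> W \<in> pts_m p1 p2 p3 (\<lambda>j. Ws j l)
              \<and> z \<in> pts_v p1 p2 p3 (\<lambda>j. zs j l) \<and> b \<in> pts_v p1 p2 p3 (\<lambda>j. bs j l)} \<subseteq> S"
  shows "\<exists>g :: nat \<Rightarrow> real mat.
           (\<forall>l\<in>{1..L}. g l \<in> limiting_subdiff_mat (n l) (n (l - 1))
               (\<lambda>V. Fobj L x \<rho> R \<Omega> ((Ws (Suc k))(l := V)) (zs (Suc k)) (as (Suc k)) (bs (Suc k)))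
               (Ws (Suc k) l))
         \<and> sqrt (\<Sum>l=1..L. (fnorm (g l))\<^sup>2)
             \<le> Max ({M} \<union> (\<lambda>l. M + th (Suc k) l) ` {1..L}) *
               ( normWs L (\<lambda>l. Ws (Suc k) l - Ws k l)
               + normVs 1 L (\<lambda>l. zs (Suc k) l - zs k l)
               + normVs 1 (L - 1) (\<lambda>l. as (Suc k) l - as k l)
               + normVs 1 L (\<lambda>l. bs (Suc k) l - bs k l)
               + normWs L (\<lambda>l. Ws k l - Ws (k - 1) l)
               + normVs 1 L (\<lambda>l. bs k l - bs (k - 1) l)
               + normVs 1 L (\<lambda>l. zs k l - zs (k - 1) l))"
proof -
  note tiam = assms(16)
  have wf: "\<And>j. wf_state L n (Ws j) (zs j) (as j) (bs j)" using tiam unfolding tiam_def by blast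
  have cW: "Ws j l \<in> carrier_mat (n l) (n (l - 1))" if "l \<in> {1..L}" for j l
    using wf[of j] that unfolding wf_state_def by blast
  have cz: "zs j l \<in> carrier_vec (n l)" if "l \<in> {1..L}" for j l
    using wf[of j] that unfolding wf_state_def by blast
  have cb: "bs j l \<in> carrier_vec (n l)" if "l \<in> {1..L}" for j l
    using wf[of j] that unfolding wf_state_def by blast
  have cA: "act x (as j) (l - 1) \<in> carrier_vec (n (l - 1))" if "l \<in> {1..L}" for j l
  proof (cases "l - 1 = 0")
    case True thus ?thesis using assms(2) by (simp add: act_def)
  next
    case False
    hence "l - 1 \<in> {1..L}" "l - 1 < L" using that by auto
    thus ?thesis using wf[of j] False unfolding wf_state_def act_def by auto
  qed
  define C1 where "C1 = Max ({M} \<union> (\<lambda>l. M + th (Suc k) l) ` {1..L})"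
  have C1M: "M \<le> C1" unfolding C1_def by (rule Max_ge) auto
  have C1th: "M + th (Suc k) l \<le> C1" if "l \<in> {1..L}" for l
    unfolding C1_def by (rule Max_ge) (use that in auto)
  define dW1 where "dW1 l = fnorm (Ws (Suc k) l - Ws k l)" for l
  define dW0 where "dW0 l = fnorm (Ws k l - Ws (k - 1) l)" for l
  define dz1 where "dz1 l = vnorm (zs (Suc k) l - zs k l)" for l
  define dz0 where "dz0 l = vnorm (zs k l - zs (k - 1) l)" for l
  define db1 where "db1 l = vnorm (bs (Suc k) l - bs k l)" for l
  define db0 where "db0 l = vnorm (bs k l - bs (k - 1) l)" for l
  define da where "da l = vnorm (act x (as (Suc k)) (l - 1) - act x (as k) (l - 1))" for l
  define T where "T l = dW1 l + dz1 l + da l + db1 l + dW0 l + db0 l + dz0 l" for l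
  define f where "f l V = Fobj L x \<rho> R \<Omega> ((Ws (Suc k))(l := V)) (zs (Suc k)) (as (Suc k)) (bs (Suc k))" for l V
  have per: "\<exists>g. g \<in> limiting_subdiff_mat (n l) (n (l - 1)) (f l) (Ws (Suc k) l) \<and> fnorm g \<le> C1 * T l"
    if l: "l \<in> {1..L}" for l
  proof -
    define a' where "a' = act x (as (Suc k)) (l - 1)"
    define X where "X = Ws (Suc k) l"
    define \<theta> where "\<theta> = th (Suc k) l"
    have Wd: "W_step \<rho> (\<Omega> l) (n l) (n (l - 1)) (ext_v p3 (act x (as (Suc k)) (l - 1)) (act x (as k) (l - 1)))
                   (ext_m p2 (Ws k l) (Ws (k - 1) l)) (ext_m p1 (Ws k l) (Ws (k - 1) l))
                   (ext_v p3 (zs k l) (zs (k - 1) l)) (ext_v p3 (bs k l) (bs (k - 1) l))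
                   (act x (as (Suc k)) (l - 1)) (zs k l) (bs k l) (th (Suc k) l) (Ws (Suc k) l)
           \<or> W_step \<rho> (\<Omega> l) (n l) (n (l - 1)) (act x (as (Suc k)) (l - 1)) (Ws k l) (Ws k l)
                   (zs k l) (bs k l) (act x (as (Suc k)) (l - 1)) (zs k l) (bs k l) (th (Suc k) l) (Ws (Suc k) l)"
      using tiam
      apply (unfold tiam_def)
      apply (drule conjunct2)
      apply (drule spec[where x=k])
      apply (drule bspec[OF _ l])
      apply (unfold Let_def)
      apply (drule conjunct1)
      apply (erule disjE)
       apply (rule disjI1, erule conjunct1)
      apply (rule disjI2, erule conjunct2)
      done
    have ex: "\<exists>aa Wh Wt zz bb. W_step \<rho> (\<Omega> l) (n l) (n (l - 1)) aa Wh Wt zz bb a' (zs k l) (bs k l) \<theta> X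
       \<and> aa \<in> carrier_vec (n (l - 1)) \<and> Wh \<in> carrier_mat (n l) (n (l - 1)) \<and> Wt \<in> carrier_mat (n l) (n (l - 1))
       \<and> bb \<in> carrier_vec (n l)
       \<and> aa \<in> pts_v p1 p2 p3 (\<lambda>j. act x (as j) (l - 1)) \<and> Wh \<in> pts_m p1 p2 p3 (\<lambda>j. Ws j l)
       \<and> zz \<in> pts_v p1 p2 p3 (\<lambda>j. zs j l) \<and> bb \<in> pts_v p1 p2 p3 (\<lambda>j. bs j l)
       \<and> vnorm (a' - aa) \<le> da l \<and> fnorm (X - Wh) \<le> dW1 l + dW0 l \<and> fnorm (X - Wt) \<le> dW1 l + dW0 l
       \<and> vnorm (zs (Suc k) l - zz) \<le> dz1 l + dz0 l \<and> vnorm (bs (Suc k) l - bb) \<le> db1 l + db0 l"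
      using Wd
    proof
      assume W1: "W_step \<rho> (\<Omega> l) (n l) (n (l - 1)) (ext_v p3 (act x (as (Suc k)) (l - 1)) (act x (as k) (l - 1)))
                   (ext_m p2 (Ws k l) (Ws (k - 1) l)) (ext_m p1 (Ws k l) (Ws (k - 1) l))
                   (ext_v p3 (zs k l) (zs (k - 1) l)) (ext_v p3 (bs k l) (bs (k - 1) l))
                   (act x (as (Suc k)) (l - 1)) (zs k l) (bs k l) (th (Suc k) l) (Ws (Suc k) l)"
      show ?thesis
      proof (intro exI conjI)
        show "W_step \<rho> (\<Omega> l) (n l) (n (l - 1)) (ext_v p3 (act x (as (Suc k)) (l - 1)) (act x (as k) (l - 1)))
                   (ext_m p2 (Ws k l) (Ws (k - 1) l)) (ext_m p1 (Ws k l) (Ws (k - 1) l))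
                   (ext_v p3 (zs k l) (zs (k - 1) l)) (ext_v p3 (bs k l) (bs (k - 1) l))
                   a' (zs k l) (bs k l) \<theta> X"
          using W1 unfolding a'_def \<theta>_def X_def .
        show "ext_v p3 (act x (as (Suc k)) (l - 1)) (act x (as k) (l - 1)) \<in> carrier_vec (n (l - 1))"
          by (intro ext_v_carrier cA l)
        show "ext_m p2 (Ws k l) (Ws (k - 1) l) \<in> carrier_mat (n l) (n (l - 1))"
          by (intro ext_m_carrier cW l)
        show "ext_m p1 (Ws k l) (Ws (k - 1) l) \<in> carrier_mat (n l) (n (l - 1))"
          by (intro ext_m_carrier cW l)
        show "ext_v p3 (bs k l) (bs (k - 1) l) \<in> carrier_vec (n l)"
          by (intro ext_v_carrier cb l)
        show "ext_v p3 (act x (as (Suc k)) (l - 1)) (act x (as k) (l - 1)) \<in> pts_v p1 p2 p3 (\<lambda>j. act x (as j) (l - 1))"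
          unfolding pts_v_def by (intro UnI2 CollectI exI[of _ "Suc k"] exI[of _ p3]) simp
        show "ext_m p2 (Ws k l) (Ws (k - 1) l) \<in> pts_m p1 p2 p3 (\<lambda>j. Ws j l)"
          unfolding pts_m_def by (intro UnI2 CollectI exI[of _ k] exI[of _ p2]) simp
        show "ext_v p3 (zs k l) (zs (k - 1) l) \<in> pts_v p1 p2 p3 (\<lambda>j. zs j l)"
          unfolding pts_v_def by (intro UnI2 CollectI exI[of _ k] exI[of _ p3]) simp
        show "ext_v p3 (bs k l) (bs (k - 1) l) \<in> pts_v p1 p2 p3 (\<lambda>j. bs j l)"
          unfolding pts_v_def by (intro UnI2 CollectI exI[of _ k] exI[of _ p3]) simp
        show "vnorm (a' - ext_v p3 (act x (as (Suc k)) (l - 1)) (act x (as k) (l - 1))) \<le> da l"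
          using vnorm_ext[OF cA[OF l, of "Suc k"] cA[OF l, of "Suc k"] cA[OF l, of k], of p3] assms(9,10)
          unfolding a'_def da_def vnorm_self
          by (smt (verit) mult_left_le_one_le vnorm_nonneg)
        show "fnorm (X - ext_m p2 (Ws k l) (Ws (k - 1) l)) \<le> dW1 l + dW0 l"
          using fnorm_ext[OF cW[OF l, of "Suc k"] cW[OF l, of k] cW[OF l, of "k - 1"], of p2] assms(7,8)
          unfolding X_def dW1_def dW0_def
          by (smt (verit) mult_left_le_one_le fnorm_nonneg)
        show "fnorm (X - ext_m p1 (Ws k l) (Ws (k - 1) l)) \<le> dW1 l + dW0 l"
          using fnorm_ext[OF cW[OF l, of "Suc k"] cW[OF l, of k] cW[OF l, of "k - 1"], of p1] assms(5,6)
          unfolding X_def dW1_def dW0_def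
          by (smt (verit) mult_left_le_one_le fnorm_nonneg)
        show "vnorm (zs (Suc k) l - ext_v p3 (zs k l) (zs (k - 1) l)) \<le> dz1 l + dz0 l"
          using vnorm_ext[OF cz[OF l, of "Suc k"] cz[OF l, of k] cz[OF l, of "k - 1"], of p3] assms(9,10)
          unfolding dz1_def dz0_def
          by (smt (verit) mult_left_le_one_le vnorm_nonneg)
        show "vnorm (bs (Suc k) l - ext_v p3 (bs k l) (bs (k - 1) l)) \<le> db1 l + db0 l"
          using vnorm_ext[OF cb[OF l, of "Suc k"] cb[OF l, of k] cb[OF l, of "k - 1"], of p3] assms(9,10)
          unfolding db1_def db0_def
          by (smt (verit) mult_left_le_one_le vnorm_nonneg)
      qed
    next
      assume W2: "W_step \<rho> (\<Omega> l) (n l) (n (l - 1)) (act x (as (Suc k)) (l - 1)) (Ws k l) (Ws k l)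
                   (zs k l) (bs k l) (act x (as (Suc k)) (l - 1)) (zs k l) (bs k l) (th (Suc k) l) (Ws (Suc k) l)"
      show ?thesis
      proof (intro exI conjI)
        show "W_step \<rho> (\<Omega> l) (n l) (n (l - 1)) a' (Ws k l) (Ws k l)
                   (zs k l) (bs k l) a' (zs k l) (bs k l) \<theta> X"
          using W2 unfolding a'_def \<theta>_def X_def .
        show "a' \<in> carrier_vec (n (l - 1))" unfolding a'_def by (rule cA[OF l])
        show "Ws k l \<in> carrier_mat (n l) (n (l - 1))" by (rule cW[OF l])
        show "Ws k l \<in> carrier_mat (n l) (n (l - 1))" by (rule cW[OF l])
        show "bs k l \<in> carrier_vec (n l)" by (rule cb[OF l])
        show "a' \<in> pts_v p1 p2 p3 (\<lambda>j. act x (as j) (l - 1))" unfolding pts_v_def a'_def by auto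
        show "Ws k l \<in> pts_m p1 p2 p3 (\<lambda>j. Ws j l)" unfolding pts_m_def by auto
        show "zs k l \<in> pts_v p1 p2 p3 (\<lambda>j. zs j l)" unfolding pts_v_def by auto
        show "bs k l \<in> pts_v p1 p2 p3 (\<lambda>j. bs j l)" unfolding pts_v_def by auto
        show "vnorm (a' - a') \<le> da l" unfolding vnorm_self da_def by simp
        show "fnorm (X - Ws k l) \<le> dW1 l + dW0 l" unfolding X_def dW1_def dW0_def by simp
        show "fnorm (X - Ws k l) \<le> dW1 l + dW0 l" unfolding X_def dW1_def dW0_def by simp
        show "vnorm (zs (Suc k) l - zs k l) \<le> dz1 l + dz0 l" unfolding dz1_def dz0_def by simp
        show "vnorm (bs (Suc k) l - bs k l) \<le> db1 l + db0 l" unfolding db1_def db0_def by simp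
      qed
    qed
    then obtain aa Wh Wt zz bb where WS: "W_step \<rho> (\<Omega> l) (n l) (n (l - 1)) aa Wh Wt zz bb a' (zs k l) (bs k l) \<theta> X"
       and caa: "aa \<in> carrier_vec (n (l - 1))" and cWh: "Wh \<in> carrier_mat (n l) (n (l - 1))"
       and cWt: "Wt \<in> carrier_mat (n l) (n (l - 1))" and cbb: "bb \<in> carrier_vec (n l)"
       and paa: "aa \<in> pts_v p1 p2 p3 (\<lambda>j. act x (as j) (l - 1))" and pWh: "Wh \<in> pts_m p1 p2 p3 (\<lambda>j. Ws j l)"
       and pzz: "zz \<in> pts_v p1 p2 p3 (\<lambda>j. zs j l)" and pbb: "bb \<in> pts_v p1 p2 p3 (\<lambda>j. bs j l)"
       and d1: "vnorm (a' - aa) \<le> da l" and d2: "fnorm (X - Wh) \<le> dW1 l + dW0 l"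
       and d3: "fnorm (X - Wt) \<le> dW1 l + dW0 l"
       and d4: "vnorm (zs (Suc k) l - zz) \<le> dz1 l + dz0 l" and d5: "vnorm (bs (Suc k) l - bb) \<le> db1 l + db0 l"
      by (elim exE conjE) (rule that; assumption)
    have conv: "convex_on_mat (n l) (n (l - 1)) (\<Omega> l)" using assms(14) l by blast
    obtain g where gc: "g \<in> carrier_mat (n l) (n (l - 1))"
      and gineq: "\<forall>Y\<in>carrier_mat (n l) (n (l - 1)).
            \<Omega> l X + phi \<rho> a' X (zs (Suc k) l) (bs (Suc k) l) + minner g (Y - X)
              \<le> \<Omega> l Y + phi \<rho> a' Y (zs (Suc k) l) (bs (Suc k) l)"
      and gnorm: "fnorm g \<le> fnorm (grad_W \<rho> a' X (zs (Suc k) l) (bs (Suc k) l) - grad_W \<rho> aa Wh zz bb) + \<theta> * fnorm (X - Wt)"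
      using layer[OF WS conv assms(3) caa cWh cWt cbb cA[OF l, of "Suc k", folded a'_def] cz[OF l, of "Suc k"] cb[OF l, of "Suc k"]]
      by (elim bexE conjE) (rule that; assumption)
    obtain S where bS: "grad_lipschitz_on \<rho> M S" and sub: "{(a, W, z, b) | a W z b.
              a \<in> pts_v p1 p2 p3 (\<lambda>j. act x (as j) (l - 1)) \<and> W \<in> pts_m p1 p2 p3 (\<lambda>j. Ws j l)
              \<and> z \<in> pts_v p1 p2 p3 (\<lambda>j. zs j l) \<and> b \<in> pts_v p1 p2 p3 (\<lambda>j. bs j l)} \<subseteq> S"
      using bspec[OF assms(18) l] by (elim exE conjE) (rule that; assumption)
    have uS: "(a', X, zs (Suc k) l, bs (Suc k) l) \<in> S"
    proof (rule subsetD[OF sub])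
      have "a' \<in> pts_v p1 p2 p3 (\<lambda>j. act x (as j) (l - 1))" unfolding pts_v_def a'_def by (rule UnI1) (rule rangeI)
      moreover have "X \<in> pts_m p1 p2 p3 (\<lambda>j. Ws j l)" unfolding pts_m_def X_def by (rule UnI1) (rule rangeI)
      moreover have "zs (Suc k) l \<in> pts_v p1 p2 p3 (\<lambda>j. zs j l)" unfolding pts_v_def by (rule UnI1) (rule rangeI)
      moreover have "bs (Suc k) l \<in> pts_v p1 p2 p3 (\<lambda>j. bs j l)" unfolding pts_v_def by (rule UnI1) (rule rangeI)
      ultimately show "(a', X, zs (Suc k) l, bs (Suc k) l) \<in> {(a, W, z, b) | a W z b.
              a \<in> pts_v p1 p2 p3 (\<lambda>j. act x (as j) (l - 1)) \<and> W \<in> pts_m p1 p2 p3 (\<lambda>j. Ws j l)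
              \<and> z \<in> pts_v p1 p2 p3 (\<lambda>j. zs j l) \<and> b \<in> pts_v p1 p2 p3 (\<lambda>j. bs j l)}" by simp
    qed
    have vS: "(aa, Wh, zz, bb) \<in> S" by (rule subsetD[OF sub]) (use paa pWh pzz pbb in blast)
    have lip: "grad_dist \<rho> (a', X, zs (Suc k) l, bs (Suc k) l) (aa, Wh, zz, bb)
          \<le> M * tup_dist (a', X, zs (Suc k) l, bs (Suc k) l) (aa, Wh, zz, bb)"
      using bspec[OF bspec[OF bS[unfolded grad_lipschitz_on_def] uS] vS] .
    have g1: "fnorm (grad_W \<rho> a' X (zs (Suc k) l) (bs (Suc k) l) - grad_W \<rho> aa Wh zz bb)
          \<le> grad_dist \<rho> (a', X, zs (Suc k) l, bs (Suc k) l) (aa, Wh, zz, bb)"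
      unfolding grad_dist_def by (simp add: sqrt_ge2)
    have g2: "tup_dist (a', X, zs (Suc k) l, bs (Suc k) l) (aa, Wh, zz, bb)
        \<le> vnorm (a' - aa) + fnorm (X - Wh) + vnorm (zs (Suc k) l - zz) + vnorm (bs (Suc k) l - bb)"
      unfolding tup_dist_def by (simp add: sqrt4_le)
    have th0: "\<theta> > 0" using WS unfolding W_step_def Let_def by blast
    define Q where "Q = da l + dz1 l + dz0 l + db1 l + db0 l"
    have Q0: "0 \<le> Q" unfolding Q_def da_def dz1_def dz0_def db1_def db0_def by simp
    have W0: "0 \<le> dW1 l + dW0 l" unfolding dW1_def dW0_def by simp
    have "fnorm g \<le> M * (Q + (dW1 l + dW0 l)) + \<theta> * (dW1 l + dW0 l)"
    proof -
      have "M * tup_dist (a', X, zs (Suc k) l, bs (Suc k) l) (aa, Wh, zz, bb) \<le> M * (Q + (dW1 l + dW0 l))"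
        using g2 d1 d2 d4 d5 assms(17) unfolding Q_def
        by (intro mult_left_mono) auto
      moreover have "\<theta> * fnorm (X - Wt) \<le> \<theta> * (dW1 l + dW0 l)"
        using d3 th0 by (intro mult_left_mono) auto
      ultimately show ?thesis using gnorm g1 lip by linarith
    qed
    also have "\<dots> = M * Q + (M + \<theta>) * (dW1 l + dW0 l)" by (simp add: algebra_simps)
    also have "\<dots> \<le> C1 * Q + C1 * (dW1 l + dW0 l)"
      using C1M C1th[OF l] Q0 W0 unfolding \<theta>_def
      by (intro add_mono mult_right_mono) auto
    also have "\<dots> = C1 * T l" unfolding T_def Q_def by (simp add: algebra_simps)
    finally have gn: "fnorm g \<le> C1 * T l" .
    have fY: "f l Y = f l X - \<Omega> l X - phi \<rho> a' X (zs (Suc k) l) (bs (Suc k) l)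
               + \<Omega> l Y + phi \<rho> a' Y (zs (Suc k) l) (bs (Suc k) l)" for Y
      unfolding f_def Fobj_upd[OF l] a'_def X_def by simp
    have fr: "g \<in> frechet_subdiff_mat (n l) (n (l - 1)) (f l) X"
      unfolding frechet_subdiff_mat_def
    proof (intro CollectI conjI gc allI impI exI[of _ 1] ballI)
      fix e :: real and Y :: "real mat" assume e: "e > 0" and Y: "Y \<in> carrier_mat (n l) (n (l - 1))"
      have "f l X + minner g (Y - X) \<le> f l Y" using gineq Y fY[of Y] by force
      moreover have "0 \<le> e * fnorm (Y - X)" using e by simp
      ultimately show "f l X + minner g (Y - X) - e * fnorm (Y - X) \<le> f l Y" by linarith
    qed simp
    have "g \<in> limiting_subdiff_mat (n l) (n (l - 1)) (f l) X"
      unfolding limiting_subdiff_mat_def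
      by (intro CollectI conjI gc exI[of _ "\<lambda>_. X"] exI[of _ "\<lambda>_. g"] allI)
         (use fr cW[OF l] in \<open>simp_all add: X_def fnorm_self\<close>)
    thus ?thesis using gn unfolding X_def by blast
  qed
  have "\<forall>l\<in>{1..L}. \<exists>g. g \<in> limiting_subdiff_mat (n l) (n (l - 1)) (f l) (Ws (Suc k) l) \<and> fnorm g \<le> C1 * T l"
    using per by blast
  then obtain g where gP: "\<And>l. l \<in> {1..L} \<Longrightarrow> g l \<in> limiting_subdiff_mat (n l) (n (l - 1)) (f l) (Ws (Suc k) l)"
     and gN: "\<And>l. l \<in> {1..L} \<Longrightarrow> fnorm (g l) \<le> C1 * T l"
    by metis
  have C10: "0 \<le> C1" using C1M assms(17) by simp
  have aeq: "L2_set da {1..L} = normVs 1 (L - 1) (\<lambda>l. as (Suc k) l - as k l)"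
  proof -
    obtain L' where L': "L = Suc L'" using assms(1) by (cases L) auto
    have "(\<Sum>l\<in>{1..L}. (da l)\<^sup>2) = (\<Sum>i\<in>{0..L'}. (da (Suc i))\<^sup>2)"
      unfolding L' using sum.shift_bounds_cl_Suc_ivl[of "\<lambda>l. (da l)\<^sup>2" 0 L'] by simp
    also have "\<dots> = (da (Suc 0))\<^sup>2 + (\<Sum>i\<in>{Suc 0..L'}. (da (Suc i))\<^sup>2)"
      by (rule sum.atLeast_Suc_atMost) simp
    also have "(da (Suc 0))\<^sup>2 = 0" unfolding da_def act_def by (simp add: vnorm_self)
    also have "(\<Sum>i\<in>{Suc 0..L'}. (da (Suc i))\<^sup>2) = (\<Sum>i\<in>{1..L - 1}. (vnorm (as (Suc k) i - as k i))\<^sup>2)"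
      unfolding L' da_def act_def by (intro sum.cong) auto
    finally show ?thesis unfolding L2_set_def normVs_def by simp
  qed
  show ?thesis unfolding C1_def[symmetric]
  proof (intro exI[of _ g] conjI ballI)
    fix l assume "l \<in> {1..L}"
    thus "g l \<in> limiting_subdiff_mat (n l) (n (l - 1))
               (\<lambda>V. Fobj L x \<rho> R \<Omega> ((Ws (Suc k))(l := V)) (zs (Suc k)) (as (Suc k)) (bs (Suc k)))
               (Ws (Suc k) l)"
      using gP unfolding f_def by blast
  next
    have "sqrt (\<Sum>l=1..L. (fnorm (g l))\<^sup>2) = L2_set (\<lambda>l. fnorm (g l)) {1..L}" by (simp add: L2_set_def)
    also have "\<dots> \<le> L2_set (\<lambda>l. C1 * T l) {1..L}"
      by (rule L2_set_mono) (use gN in auto)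
    also have "\<dots> = C1 * L2_set T {1..L}" using C10 by (simp add: L2_set_right_distrib)
    also have "\<dots> \<le> C1 * (L2_set dW1 {1..L} + L2_set dz1 {1..L} + L2_set da {1..L} + L2_set db1 {1..L}
                 + L2_set dW0 {1..L} + L2_set db0 {1..L} + L2_set dz0 {1..L})"
      unfolding T_def by (intro mult_left_mono C10 L2_7)
    also have "\<dots> = C1 * ( normWs L (\<lambda>l. Ws (Suc k) l - Ws k l)
               + normVs 1 L (\<lambda>l. zs (Suc k) l - zs k l)
               + normVs 1 (L - 1) (\<lambda>l. as (Suc k) l - as k l)
               + normVs 1 L (\<lambda>l. bs (Suc k) l - bs k l)
               + normWs L (\<lambda>l. Ws k l - Ws (k - 1) l)
               + normVs 1 L (\<lambda>l. bs k l - bs (k - 1) l)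
               + normVs 1 L (\<lambda>l. zs k l - zs (k - 1) l))"
      unfolding aeq[symmetric]
      by (simp add: L2_set_def normWs_def normVs_def dW1_def dW0_def dz1_def dz0_def db1_def db0_def)
    finally show "sqrt (\<Sum>l=1..L. (fnorm (g l))\<^sup>2) \<le> C1 * ( normWs L (\<lambda>l. Ws (Suc k) l - Ws k l)
               + normVs 1 L (\<lambda>l. zs (Suc k) l - zs k l)
               + normVs 1 (L - 1) (\<lambda>l. as (Suc k) l - as k l)
               + normVs 1 L (\<lambda>l. bs (Suc k) l - bs k l)
               + normWs L (\<lambda>l. Ws k l - Ws (k - 1) l)
               + normVs 1 L (\<lambda>l. bs k l - bs (k - 1) l)
               + normVs 1 L (\<lambda>l. zs k l - zs (k - 1) l))" .
  qed
qed

end
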